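(* Let $g_1,f_1,f_2$ be real numbers with $f_1\neq 0$, and let $g(t)=1+g_1t$ and $f(t)=f_1t+f_2t^2$. Then the quasi-Riordan array $[g,f]$, i.e. the infinite lower triangular matrix \[ [g,f]=\begin{bmatrix} 1& & & & \\ g_1 & f_1 & & & \\ 0& f_2& f_1 & & \\ 0&0 & f_2 & f_1&\\ \vdots& &\ddots &\ddots &\ddots\end{bmatrix}, \] is totally positive if and only if $g_1\ge 0$, $f_1\ge 0$ and $f_2\ge 0$.
   Context: For formal power series $g(t)=\sum_{n\ge0}g_nt^n$ with $g_0=1$ and $f(t)=\sum_{n\ge1}f_nt^n$ with $f_1\neq0$, the quasi-Riordan array $[g,f]$ is the infinite lower triangular matrix $(r_{n,k})_{n,k\ge0}$ whose $0$th column has generating function $g$ and whose $k$th column ($k\ge1$) has generating function $t^{k-1}f(t)$; i.e. $r_{n,0}=g_n$ and $r_{n,k}=f_{n-k+1}$ for $k\ge1$ (with $f_j=0$ for $j\le 0$). An infinite matrix is totally positive (TP) if all its minors (of all orders) are nonnegative. *)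

theory Defs
  imports Complex_Main "HOL-Combinatorics.Permutations"
begin

text \<open>Infinite matrices are functions nat => nat => real (row index, column index).\<close>

definition det_fin :: "nat \<Rightarrow> (nat \<Rightarrow> nat \<Rightarrow> real) \<Rightarrow> real" where
  "det_fin k A = (\<Sum>p | p permutes {..<k}. of_int (sign p) * (\<Prod>i<k. A i (p i)))"

definition minor :: "(nat \<Rightarrow> nat \<Rightarrow> real) \<Rightarrow> nat \<Rightarrow> (nat \<Rightarrow> nat) \<Rightarrow> (nat \<Rightarrow> nat) \<Rightarrow> real" where
  "minor M k I J = det_fin k (\<lambda>i j. M (I i) (J j))"

definition totally_positive :: "(nat \<Rightarrow> nat \<Rightarrow> real) \<Rightarrow> bool" where
  "totally_positive M \<longleftrightarrow>
     (\<forall>k I J. strict_mono_on {..<k} I \<longrightarrow> strict_mono_on {..<k} J \<longrightarrow> minor M k I J \<ge> 0)"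

text \<open>Quasi-Riordan array [g,f] from coefficient sequences g (with g 0 = 1) and f (f 0 = 0 ignored):
  r n 0 = g n, and r n k = f (n-k+1) for k >= 1 (zero when n - k + 1 <= 0).\<close>
definition quasi_riordan :: "(nat \<Rightarrow> real) \<Rightarrow> (nat \<Rightarrow> real) \<Rightarrow> nat \<Rightarrow> nat \<Rightarrow> real" where
  "quasi_riordan g f n k = (if k = 0 then g n else if k \<le> n then f (n - k + 1) else 0)"

end

theory Submission
  imports Defs
begin

lemma smono_ge: "strict_mono_on {..<k} (p::nat\<Rightarrow>nat) \<Longrightarrow> i < k \<Longrightarrow> i \<le> p i"
proof (induction i)
  case 0 then show ?case by simp
next
  case (Suc i)
  have "p i < p (Suc i)" using Suc.prems by (intro strict_mono_onD[OF Suc.prems(1)]) auto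
  then show ?case using Suc by simp
qed

lemma perm_mono_id:
  fixes p :: "nat \<Rightarrow> nat"
  assumes p: "p permutes {..<k}" and m: "strict_mono_on {..<k} p"
  shows "p = id"
proof -
  have ge: "\<And>i. i < k \<Longrightarrow> i \<le> p i" using smono_ge[OF m] by blast
  have "(\<Sum>i<k. p i) = (\<Sum>i<k. i)"
    using sum.reindex[of p "{..<k}" id] permutes_inj_on[OF p] permutes_image[OF p] by simp
  then have eq: "\<forall>i\<in>{..<k}. p i = i"
    using sum_mono_inv[of "\<lambda>i. i" "{..<k}" p] ge by (metis finite_lessThan lessThan_iff)
  show ?thesis
  proof
    fix x show "p x = id x"
      using eq p by (cases "x < k") (auto simp: permutes_def)
  qed
qed

lemma bidiag_tp:
  assumes nn: "\<And>n k. M n k \<ge> 0" and z: "\<And>n k. M n k \<noteq> 0 \<Longrightarrow> k \<le> n \<and> n \<le> Suc k"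
  shows "totally_positive M"
  unfolding totally_positive_def minor_def det_fin_def
proof (intro allI impI sum_nonneg)
  fix k I J p
  assume I: "strict_mono_on {..<k} (I::nat\<Rightarrow>nat)" and J: "strict_mono_on {..<k} (J::nat\<Rightarrow>nat)"
    and "p \<in> {p. p permutes {..<k}}"
  then have p: "p permutes {..<k}" by simp
  show "0 \<le> of_int (sign p) * (\<Prod>i<k. M (I i) (J (p i)))"
  proof (cases "(\<Prod>i<k. M (I i) (J (p i))) = 0")
    case True then show ?thesis by (simp only: True mult_zero_right order_refl)
  next
    case False
    then have nz: "\<And>i. i < k \<Longrightarrow> M (I i) (J (p i)) \<noteq> 0" by auto
    have pk: "\<And>i. i < k \<Longrightarrow> p i < k" using permutes_in_image[OF p] by auto
    have "strict_mono_on {..<k} p"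
    proof (rule strict_mono_onI)
      fix i i' assume "i \<in> {..<k}" "i' \<in> {..<k}" "i < i'"
      then have ik: "i < k" "i' < k" "i < i'" by auto
      show "p i < p i'"
      proof (rule ccontr)
        assume "\<not> p i < p i'"
        moreover have "p i \<noteq> p i'" using permutes_inj[OF p] ik(3) by (metis inj_eq less_irrefl)
        ultimately have "p i' < p i" by simp
        then have "J (p i') < J (p i)" using J pk ik by (intro strict_mono_onD[OF J]) auto
        moreover have "I i < I i'" using I ik by (intro strict_mono_onD[OF I]) auto
        moreover have "J (p i) \<le> I i" using z[OF nz[OF ik(1)]] by simp
        moreover have "I i' \<le> Suc (J (p i'))" using z[OF nz[OF ik(2)]] by simp
        ultimately show False by simp
      qed
    qed
    then have "p = id" using perm_mono_id p by blast
    then show ?thesis using nn by (simp add: prod_nonneg)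
  qed
qed

theorem corollary2p2:
  fixes g1 f1 f2 :: real
  assumes "f1 \<noteq> 0"
  shows "totally_positive
           (quasi_riordan (\<lambda>n. if n = 0 then 1 else if n = 1 then g1 else 0)
                          (\<lambda>n. if n = 1 then f1 else if n = 2 then f2 else 0))
         \<longleftrightarrow> g1 \<ge> 0 \<and> f1 \<ge> 0 \<and> f2 \<ge> 0"
  (is "totally_positive ?M \<longleftrightarrow> _")
proof
  assume tp: "totally_positive ?M"
  have one: "\<And>n m. ?M n m \<ge> 0"
  proof -
    fix n m
    have "minor ?M 1 (\<lambda>_. n) (\<lambda>_. m) \<ge> 0" using tp unfolding totally_positive_def
      by (auto simp: strict_mono_on_def)
    moreover have "{p. p permutes {..<Suc 0}} = {id::nat\<Rightarrow>nat}"
    proof -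
      have "{..<Suc 0} = {0::nat}" by auto
      then show ?thesis by simp
    qed
    ultimately show "?M n m \<ge> 0" by (simp add: minor_def det_fin_def)
  qed
  have "?M 1 0 = g1" "?M 1 1 = f1" "?M 2 1 = f2" by (simp_all add: quasi_riordan_def)
  moreover have "?M 1 0 \<ge> 0" "?M 1 1 \<ge> 0" "?M 2 1 \<ge> 0" by (rule one)+
  ultimately show "g1 \<ge> 0 \<and> f1 \<ge> 0 \<and> f2 \<ge> 0" by simp
next
  assume h: "g1 \<ge> 0 \<and> f1 \<ge> 0 \<and> f2 \<ge> 0"
  show "totally_positive ?M"
  proof (rule bidiag_tp)
    fix n k show "?M n k \<ge> 0" using h by (auto simp: quasi_riordan_def)
  next
    fix n k assume "?M n k \<noteq> 0" then show "k \<le> n \<and> n \<le> Suc k"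
      by (auto simp: quasi_riordan_def split: if_splits)
  qed
qed

end
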